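(* Let $\mathcal S(a,b;r)=(S_{n,k}(a,b;r))_{n,k\ge0}$ (infinite lower-triangular matrix). (i) $\mathcal S(a,c;r_1+r_2)=\mathcal S(a,b;r_1)\,\mathcal S(b,c;r_2)$ for all complex $a,b,c,r_1,r_2$; moreover $\mathcal S(a,a;0)$ is the identity matrix, so $\mathcal S(a,b;r)^{-1}=\mathcal S(b,a;-r)$. (ii) For nonnegative integers $n,k,k_1,k_2$ with $k=k_1+k_2$, $$\frac{k!}{k_1!\,k_2!}S_{n,k}(a,b;r_1+r_2)=\sum\frac{n!}{n_1!\,n_2!}S_{n_1,k_1}(a,b;r_1)\,S_{n_2,k_2}(a,b;r_2),$$ summed over nonnegative $n_1,n_2$ with $n_1+n_2=n$, $n_1\ge k_1$, $n_2\ge k_2$. (iii) For nonnegative integers $k,n_1,n,k_2$ with $n_1=n+k_2$, $$\frac{n_1!}{n!\,k_2!}S_{n,k}(a,b;r_1+r_2)=\sum\frac{k_1!}{k!\,n_2!}S_{n_1,k_1}(a,b;r_1)\,S_{n_2,k_2}(b,a;r_2),$$ summed over nonnegative $k_1,n_2$ with $k_1=k+n_2$, $n_1\ge k_1$, $n_2\ge k_2$ (note $a,b$ interchanged in the second factor).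
   Context: Hsu–Shiue Stirling numbers $S_{n,k}(a,b;r)$: defined by $S_{0,0}=1$, $S_{n,k}=0$ if $n<0$, $k<0$ or $k>n$, and $S_{n+1,k+1}=[-an+b(k+1)+r]S_{n,k+1}+S_{n,k}$ for $n\ge0$, $k\in\mathbb Z$. *)

theory Defs
  imports Complex_Main
begin

text \<open>Hsu--Shiue Stirling numbers S_{n,k}(a,b;r) for n,k >= 0.
  Entries with k < 0 are 0, so the recurrence at k = -1 reads
  S_{n+1,0} = (-a n + r) S_{n,0}; entries with k > n vanish automatically.\<close>
fun HS :: "complex \<Rightarrow> complex \<Rightarrow> complex \<Rightarrow> nat \<Rightarrow> nat \<Rightarrow> complex" where
  "HS a b r 0 k = (if k = 0 then 1 else 0)"
| "HS a b r (Suc n) 0 = (- a * of_nat n + r) * HS a b r n 0"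
| "HS a b r (Suc n) (Suc k) =
     (- a * of_nat n + b * of_nat (Suc k) + r) * HS a b r n (Suc k) + HS a b r n k"

end

theory Submission
  imports Defs
begin


lemma HS_gt: "n < k \<Longrightarrow> HS a b r n k = 0"
proof (induction n arbitrary: k)
  case 0 then show ?case by simp
next
  case (Suc n) then show ?case by (cases k) auto
qed

lemma HS_rec: "HS a b r (Suc n) k = (- a * of_nat n + b * of_nat k + r) * HS a b r n k
   + (if k = 0 then 0 else HS a b r n (k - 1))"
  by (cases k) auto

lemma HS_unique:
  assumes "\<And>k. F 0 k = (if k = 0 then 1 else 0)"
    and "\<And>n k. F (Suc n) k = (- a * of_nat n + b * of_nat k + r) * F n k
        + (if k = 0 then 0 else F n (k - 1))"
  shows "F n k = HS a b r n k"
proof (induction n arbitrary: k)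
  case 0 then show ?case using assms(1) by simp
next
  case (Suc n) then show ?case using assms(2) HS_rec by simp
qed

lemma shift_sum: "(\<Sum>j\<le>Suc n. (if j = 0 then 0 else f (j - 1)) * g j) = (\<Sum>j\<le>n. f j * g (Suc j) :: complex)"
  by (subst sum.atMost_Suc_shift) simp

lemma HS_comp: "HS a c (r1 + r2) n k = (\<Sum>j\<le>n. HS a b r1 n j * HS b c r2 j k)"
proof -
  define T where "T = (\<lambda>n k. \<Sum>j\<le>n. HS a b r1 n j * HS b c r2 j k)"
  have "T n k = HS a c (r1 + r2) n k"
  proof (rule HS_unique)
    show "T 0 k = (if k = 0 then 1 else 0)" for k by (simp add: T_def)
    show "T (Suc n) k = (- a * of_nat n + c * of_nat k + (r1 + r2)) * T n k
        + (if k = 0 then 0 else T n (k - 1))" for n k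
    proof -
      have "T (Suc n) k = (\<Sum>j\<le>Suc n. ((- a * of_nat n + b * of_nat j + r1) * HS a b r1 n j) * HS b c r2 j k)
         + (\<Sum>j\<le>Suc n. (if j = 0 then 0 else HS a b r1 n (j - 1)) * HS b c r2 j k)"
        unfolding T_def HS_rec[of a b r1 n] by (simp add: distrib_right sum.distrib)
      also have "(\<Sum>j\<le>Suc n. ((- a * of_nat n + b * of_nat j + r1) * HS a b r1 n j) * HS b c r2 j k)
         = (\<Sum>j\<le>n. ((- a * of_nat n + b * of_nat j + r1) * HS a b r1 n j) * HS b c r2 j k)"
        by (simp add: HS_gt)
      also have "(\<Sum>j\<le>Suc n. (if j = 0 then 0 else HS a b r1 n (j - 1)) * HS b c r2 j k)
         = (\<Sum>j\<le>n. HS a b r1 n j * HS b c r2 (Suc j) k)"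
        by (rule shift_sum)
      also have "(\<Sum>j\<le>n. ((- a * of_nat n + b * of_nat j + r1) * HS a b r1 n j) * HS b c r2 j k)
         + (\<Sum>j\<le>n. HS a b r1 n j * HS b c r2 (Suc j) k)
         = (\<Sum>j\<le>n. (- a * of_nat n + c * of_nat k + (r1 + r2)) * (HS a b r1 n j * HS b c r2 j k)
             + (if k = 0 then 0 else HS a b r1 n j * HS b c r2 j (k - 1)))"
        unfolding sum.distrib[symmetric]
        by (rule sum.cong) (auto simp: HS_rec[of b c r2] algebra_simps)
      also have "\<dots> = (- a * of_nat n + c * of_nat k + (r1 + r2)) * T n k
        + (if k = 0 then 0 else T n (k - 1))"
        by (simp add: T_def sum.distrib sum_distrib_left)
      finally show ?thesis .
    qed
  qed
  then show ?thesis by (simp add: T_def)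
qed

lemma HS_id: "HS a a 0 n k = (if n = k then 1 else 0)"
proof (induction n arbitrary: k)
  case 0 then show ?case by simp
next
  case (Suc n) then show ?case by (cases k) (auto simp: HS_rec)
qed

definition conv :: "(nat \<Rightarrow> complex) \<Rightarrow> (nat \<Rightarrow> complex) \<Rightarrow> nat \<Rightarrow> complex" where
  "conv f g n = (\<Sum>i\<le>n. of_nat (n choose i) * f i * g (n - i))"

lemma conv_Suc: "conv f g (Suc n) = conv (\<lambda>i. f (Suc i)) g n + conv f (\<lambda>j. g (Suc j)) n"
proof -
  have "conv f g (Suc n) = f 0 * g (Suc n) + (\<Sum>i\<le>n. of_nat (n choose i) * f (Suc i) * g (n - i))
      + (\<Sum>i\<le>n. of_nat (n choose Suc i) * f (Suc i) * g (n - i))"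
    unfolding conv_def by (subst sum.atMost_Suc_shift) (simp add: distrib_right sum.distrib)
  moreover have "conv f (\<lambda>j. g (Suc j)) n = (\<Sum>i\<le>Suc n. of_nat (n choose i) * f i * g (Suc n - i))"
    unfolding conv_def by (simp add: Suc_diff_le)
  moreover have "\<dots> = f 0 * g (Suc n) + (\<Sum>i\<le>n. of_nat (n choose Suc i) * f (Suc i) * g (n - i))"
    by (subst sum.atMost_Suc_shift) simp
  ultimately show ?thesis unfolding conv_def by simp
qed

lemma U_rec:
  fixes a b r1 r2 :: complex
  shows "conv (\<lambda>i. HS a b r1 i k1) (\<lambda>j. HS a b r2 j k2) (Suc n) = (- a * of_nat n + b * of_nat (k1 + k2) + (r1 + r2)) * conv (\<lambda>i. HS a b r1 i k1) (\<lambda>j. HS a b r2 j k2) n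
     + (if k1 = 0 then 0 else conv (\<lambda>i. HS a b r1 i (k1 - 1)) (\<lambda>j. HS a b r2 j k2) n)
     + (if k2 = 0 then 0 else conv (\<lambda>i. HS a b r1 i k1) (\<lambda>j. HS a b r2 j (k2 - 1)) n)"
proof -
  have "conv (\<lambda>i. HS a b r1 i k1) (\<lambda>j. HS a b r2 j k2) (Suc n) = (\<Sum>i\<le>n. of_nat (n choose i) * HS a b r1 (Suc i) k1 * HS a b r2 (n - i) k2
     + of_nat (n choose i) * HS a b r1 i k1 * HS a b r2 (Suc (n - i)) k2)"
    unfolding conv_Suc unfolding conv_def by (simp only: sum.distrib)
  also have "\<dots> = (\<Sum>i\<le>n. (- a * of_nat n + b * of_nat (k1 + k2) + (r1 + r2)) *
        (of_nat (n choose i) * HS a b r1 i k1 * HS a b r2 (n - i) k2)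
      + (if k1 = 0 then 0 else of_nat (n choose i) * HS a b r1 i (k1 - 1) * HS a b r2 (n - i) k2)
      + (if k2 = 0 then 0 else of_nat (n choose i) * HS a b r1 i k1 * HS a b r2 (n - i) (k2 - 1)))"
    by (rule sum.cong) (auto simp: HS_rec of_nat_diff algebra_simps)
  also have "\<dots> = (- a * of_nat n + b * of_nat (k1 + k2) + (r1 + r2)) * conv (\<lambda>i. HS a b r1 i k1) (\<lambda>j. HS a b r2 j k2) n
     + (if k1 = 0 then 0 else conv (\<lambda>i. HS a b r1 i (k1 - 1)) (\<lambda>j. HS a b r2 j k2) n)
     + (if k2 = 0 then 0 else conv (\<lambda>i. HS a b r1 i k1) (\<lambda>j. HS a b r2 j (k2 - 1)) n)"
    unfolding conv_def
    by (cases k1; cases k2) (simp_all add: sum.distrib sum_distrib_left)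
  finally show ?thesis .
qed

lemma part2_aux:
  fixes a b r1 r2 :: complex
  shows "conv (\<lambda>i. HS a b r1 i k1) (\<lambda>j. HS a b r2 j k2) n
     = of_nat ((k1 + k2) choose k1) * HS a b (r1 + r2) n (k1 + k2)"
proof (induction n arbitrary: k1 k2)
  case 0 then show ?case by (simp add: conv_def)
next
  case (Suc n)
  show ?case
    unfolding U_rec Suc HS_rec[of a b "r1+r2" n]
    by (cases k1; cases k2) (simp_all add: algebra_simps)
qed



lemma pascal_pt: "of_nat ((k + n2) choose k) * (if k + n2 = 0 then 0 else f (k + n2 - 1))
  = (if k = 0 then 0 else of_nat ((k - 1 + n2) choose (k - 1)) * f (k - 1 + n2))
  + (if n2 = 0 then 0 else of_nat ((k + (n2 - 1)) choose k) * f (k + (n2 - 1)) :: complex)"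
  by (cases k; cases n2) (simp_all add: algebra_simps)

definition DD :: "complex \<Rightarrow> complex \<Rightarrow> complex \<Rightarrow> complex \<Rightarrow> nat \<Rightarrow> nat \<Rightarrow> nat \<Rightarrow> complex" where
  "DD a b r1 r2 n1 k k2 = (\<Sum>n2\<le>n1. of_nat ((k + n2) choose k) * HS a b r1 n1 (k + n2) * HS b a r2 n2 k2)"

lemma DD_rec: "DD a b r1 r2 (Suc n1) k k2 = (- a * of_nat n1 + a * of_nat k2 + b * of_nat k + (r1 + r2)) * DD a b r1 r2 n1 k k2
   + (if k = 0 then 0 else DD a b r1 r2 n1 (k - 1) k2) + (if k2 = 0 then 0 else DD a b r1 r2 n1 k (k2 - 1))"
proof -
  let ?A = "HS a b r1 n1" and ?B = "HS b a r2"
  let ?c = "- a * of_nat n1 + a * of_nat k2 + b * of_nat k + (r1 + r2)"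
  let ?X' = "(\<Sum>n2\<le>Suc n1. of_nat ((k + n2) choose k) * ((- a * of_nat n1 + b * of_nat (k + n2) + r1) * ?A (k + n2)) * ?B n2 k2)"
  let ?X = "(\<Sum>n2\<le>n1. of_nat ((k + n2) choose k) * ((- a * of_nat n1 + b * of_nat (k + n2) + r1) * ?A (k + n2)) * ?B n2 k2)"
  let ?Y = "(\<Sum>n2\<le>Suc n1. (of_nat ((k + n2) choose k) * (if k + n2 = 0 then 0 else ?A (k + n2 - 1))) * ?B n2 k2)"
  let ?Y1 = "(\<Sum>n2\<le>Suc n1. (if k = 0 then 0 else of_nat ((k - 1 + n2) choose (k - 1)) * ?A (k - 1 + n2)) * ?B n2 k2)"
  let ?Y2 = "(\<Sum>n2\<le>Suc n1. (if n2 = 0 then 0 else of_nat ((k + (n2 - 1)) choose k) * ?A (k + (n2 - 1))) * ?B n2 k2)"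
  let ?Ik = "(if k = 0 then 0 else DD a b r1 r2 n1 (k - 1) k2)"
  let ?Ik2 = "(if k2 = 0 then 0 else DD a b r1 r2 n1 k (k2 - 1))"
  let ?Z = "(\<Sum>m\<le>n1. of_nat ((k + m) choose k) * ?A (k + m) * ?B (Suc m) k2)"
  let ?W = "(\<Sum>m\<le>n1. ?c * (of_nat ((k + m) choose k) * ?A (k + m) * ?B m k2)
        + (if k2 = 0 then 0 else of_nat ((k + m) choose k) * ?A (k + m) * ?B m (k2 - 1)))"
  have e1: "DD a b r1 r2 (Suc n1) k k2 = ?X' + ?Y"
    unfolding DD_def HS_rec[of a b r1 n1] sum.distrib[symmetric]
    by (rule sum.cong) (simp_all only: distrib_left distrib_right)
  have e2: "?X' = ?X"
    by (simp add: HS_gt)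
  have e3: "?Y = ?Y1 + ?Y2"
    by (simp only: pascal_pt distrib_right sum.distrib)
  have e4: "?Y1 = ?Ik"
    by (cases k) (simp_all add: DD_def HS_gt)
  have e5: "?Y2 = ?Z"
    by (rule shift_sum[where f = "\<lambda>m. of_nat ((k + m) choose k) * ?A (k + m)"])
  have e6: "?X + ?Z = ?W"
    unfolding sum.distrib[symmetric]
    by (rule sum.cong) (auto simp: HS_rec[of b a r2] algebra_simps)
  have e7: "?W = ?c * DD a b r1 r2 n1 k k2 + ?Ik2"
    by (cases k2) (simp_all add: DD_def sum.distrib sum_distrib_left)
  have "DD a b r1 r2 (Suc n1) k k2 = (?X + ?Z) + ?Ik"
    unfolding e1 e2 e3 e4 e5 by (simp only: add_ac)
  then show ?thesis unfolding e6 e7 by (simp only: add_ac)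
qed

lemma part3_aux: "DD a b r1 r2 n1 k k2 = of_nat (n1 choose k2) * HS a b (r1 + r2) (n1 - k2) k"
proof (induction n1 arbitrary: k k2)
  case 0 then show ?case by (cases k2) (simp_all add: DD_def)
next
  case (Suc n1)
  show ?case
  proof (cases k2)
    case 0 then show ?thesis unfolding DD_rec Suc by (simp add: HS_rec)
  next
    case (Suc j)
    show ?thesis
    proof (cases "n1 < Suc j")
      case True
      then show ?thesis unfolding DD_rec Suc.IH using Suc by simp
    next
      case False
      then obtain d where d: "n1 = Suc j + d" by (metis le_iff_add not_less)
      show ?thesis unfolding DD_rec Suc.IH using Suc
        by (simp add: d HS_rec algebra_simps)
    qed
  qed
qed


lemma pair_sum2:
  fixes n k1 k2 :: nat
  shows  "(\<Sum>(n1, n2) \<in> {(n1, n2). n1 + n2 = n \<and> k1 \<le> n1 \<and> k2 \<le> n2}. f n1 n2)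
   = (\<Sum>i\<le>n. if k1 \<le> i \<and> k2 \<le> n - i then f i (n - i) else (0::complex))"
proof -
  have S: "{(n1, n2). n1 + n2 = n \<and> k1 \<le> n1 \<and> k2 \<le> n2} = (\<lambda>i. (i, n - i)) ` {i\<in>{..n}. k1 \<le> i \<and> k2 \<le> n - i}"
    by (auto simp: image_iff)
  have "inj_on (\<lambda>i. (i, n - i)) {i\<in>{..n}. k1 \<le> i \<and> k2 \<le> n - i}" by (auto simp: inj_on_def)
  then have "(\<Sum>(n1, n2) \<in> (\<lambda>i. (i, n - i)) ` {i\<in>{..n}. k1 \<le> i \<and> k2 \<le> n - i}. f n1 n2)
     = (\<Sum>i\<in>{i\<in>{..n}. k1 \<le> i \<and> k2 \<le> n - i}. f i (n - i))" by (simp add: sum.reindex)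
  also have "\<dots> = (\<Sum>i\<le>n. if k1 \<le> i \<and> k2 \<le> n - i then f i (n - i) else (0::complex))"
    by (simp only: sum.inter_filter[OF finite_atMost])
  finally show ?thesis unfolding S .
qed

lemma pair_sum3:
  fixes n1 k k2 :: nat
  shows  "(\<Sum>(k1, n2) \<in> {(k1, n2). k1 = k + n2 \<and> k1 \<le> n1 \<and> k2 \<le> n2}. f k1 n2)
   = (\<Sum>i\<le>n1. if k + i \<le> n1 \<and> k2 \<le> i then f (k + i) i else (0::complex))"
proof -
  have S: "{(k1, n2). k1 = k + n2 \<and> k1 \<le> n1 \<and> k2 \<le> n2} = (\<lambda>i. (k + i, i)) ` {i\<in>{..n1}. k + i \<le> n1 \<and> k2 \<le> i}"
    by (auto simp: image_iff)
  have "inj_on (\<lambda>i. (k + i, i)) {i\<in>{..n1}. k + i \<le> n1 \<and> k2 \<le> i}" by (auto simp: inj_on_def)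
  then have "(\<Sum>(k1, n2) \<in> (\<lambda>i. (k + i, i)) ` {i\<in>{..n1}. k + i \<le> n1 \<and> k2 \<le> i}. f k1 n2)
     = (\<Sum>i\<in>{i\<in>{..n1}. k + i \<le> n1 \<and> k2 \<le> i}. f (k + i) i)" by (simp add: sum.reindex)
  also have "\<dots> = (\<Sum>i\<le>n1. if k + i \<le> n1 \<and> k2 \<le> i then f (k + i) i else (0::complex))"
    by (simp only: sum.inter_filter[OF finite_atMost])
  finally show ?thesis unfolding S .
qed

lemma part2:
  fixes a b r1 r2 :: complex
  assumes "k = k1 + k2"
  shows "fact k / (fact k1 * fact k2) * HS a b (r1 + r2) n k =
          (\<Sum>(n1, n2) \<in> {(n1, n2). n1 + n2 = n \<and> k1 \<le> n1 \<and> k2 \<le> n2}.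
             fact n / (fact n1 * fact n2) * HS a b r1 n1 k1 * HS a b r2 n2 k2)"
proof -
  have L0: "(of_nat (k choose k1) :: complex) = fact k / (fact k1 * fact k2)"
    using binomial_fact[of k1 k] assms by simp
  have L: "fact k / (fact k1 * fact k2) = (of_nat (k choose k1) :: complex)"
    using L0 by simp
  have "(\<Sum>(n1, n2) \<in> {(n1, n2). n1 + n2 = n \<and> k1 \<le> n1 \<and> k2 \<le> n2}.
             fact n / (fact n1 * fact n2) * HS a b r1 n1 k1 * HS a b r2 n2 k2)
     = conv (\<lambda>i. HS a b r1 i k1) (\<lambda>j. HS a b r2 j k2) n"
    unfolding pair_sum2 conv_def
    by (rule sum.cong) (auto simp: binomial_fact HS_gt)
  then show ?thesis using L part2_aux assms by simp
qed

lemma part3: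
  fixes a b r1 r2 :: complex
  assumes "n1 = n + k2"
  shows "fact n1 / (fact n * fact k2) * HS a b (r1 + r2) n k =
          (\<Sum>(k1, n2) \<in> {(k1, n2). k1 = k + n2 \<and> k1 \<le> n1 \<and> k2 \<le> n2}.
             fact k1 / (fact k * fact n2) * HS a b r1 n1 k1 * HS b a r2 n2 k2)"
proof -
  have L0: "(of_nat (n1 choose k2) :: complex) = fact n1 / (fact k2 * fact n)"
    using binomial_fact[of k2 n1] assms by simp
  have L: "fact n1 / (fact n * fact k2) = (of_nat (n1 choose k2) :: complex)"
    using L0 by (simp add: mult.commute)
  have "(\<Sum>(k1, n2) \<in> {(k1, n2). k1 = k + n2 \<and> k1 \<le> n1 \<and> k2 \<le> n2}.
             fact k1 / (fact k * fact n2) * HS a b r1 n1 k1 * HS b a r2 n2 k2)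
     = DD a b r1 r2 n1 k k2"
    unfolding pair_sum3 DD_def
    by (rule sum.cong) (auto simp: binomial_fact HS_gt)
  then show ?thesis using L part3_aux[of a b r1 r2 n1 k k2] assms by simp
qed

theorem mainTheorem13:
  fixes a b c r r1 r2 :: complex
  shows
    "(\<forall>n k. HS a c (r1 + r2) n k = (\<Sum>j\<le>n. HS a b r1 n j * HS b c r2 j k))
     \<and> (\<forall>n k. HS a a 0 n k = (if n = k then 1 else 0))
     \<and> (\<forall>n k. (\<Sum>j\<le>n. HS a b r n j * HS b a (- r) j k) = (if n = k then 1 else 0))
     \<and> (\<forall>n k. (\<Sum>j\<le>n. HS b a (- r) n j * HS a b r j k) = (if n = k then 1 else 0))
     \<and> (\<forall>n k k1 k2. k = k1 + k2 \<longrightarrow>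
          fact k / (fact k1 * fact k2) * HS a b (r1 + r2) n k =
          (\<Sum>(n1, n2) \<in> {(n1, n2). n1 + n2 = n \<and> k1 \<le> n1 \<and> k2 \<le> n2}.
             fact n / (fact n1 * fact n2) * HS a b r1 n1 k1 * HS a b r2 n2 k2))
     \<and> (\<forall>k n1 n k2. n1 = n + k2 \<longrightarrow>
          fact n1 / (fact n * fact k2) * HS a b (r1 + r2) n k =
          (\<Sum>(k1, n2) \<in> {(k1, n2). k1 = k + n2 \<and> k1 \<le> n1 \<and> k2 \<le> n2}.
             fact k1 / (fact k * fact n2) * HS a b r1 n1 k1 * HS b a r2 n2 k2))"
  using HS_comp HS_id part2 part3
    HS_comp[of a a r "-r" _ _ b] HS_comp[of b b "-r" r _ _ a]
  by (simp add: HS_id)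

end
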